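(* Let $\mathbf x\in\Omega$ and $\mathbf u=g(\mathbf x)$. (i) If $(X_j)_{j\ge1}$ is the $M$-decomposition of $\mathbf x$, then the $M'$-decomposition of $g(\mathbf x)$ is $(g_0(X_j))_{j\ge1}$. (ii) If $(U_j)_{j\ge1}$ is the $M'$-decomposition of $\mathbf u\in\Omega$ and $h(\mathbf u)=\prod_{j\ge1}g_0^{-1}(U_j)$, then the $M$-decomposition of $h(\mathbf u)$ is $(g_0^{-1}(U_j))_{j\ge1}$. (iii) The map $g:\Omega\to\Omega$ is a bijection.
   Context: Let $\Sigma=\{1,\dots,N\}$ with $N\ge4$, and let $\tau,\kappa,\alpha,\gamma\in\Sigma$ be distinct except that $\tau=\alpha$ is allowed. $\Sigma^*$ denotes finite words, $a^k$ the word of $k$ copies of $a$, and $\Omega=\{\omega\kappa^\infty:\omega\in\Sigma^*\}$. Let $\mathcal C_M=\{\tau\gamma^k:k\ge2\}\cup\{\kappa\alpha^k\kappa\gamma:k\ge0\}$ and $\mathcal C_{M'}=\{\kappa\alpha^k\kappa\gamma:k\ge0\}\cup\{\kappa\alpha^k\kappa\gamma\gamma:k\ge0\}\cup\{\tau\gamma\gamma\}$; letters of $\Sigma$ are regarded as one-letter words. The $M$-decomposition of $\mathbf x\in\Omega$ is $\mathbf x=X_1X_2\cdots$ where $X_1$ is the longest prefix of $\mathbf x$ in $\mathcal C_M\cup\Sigma$, and inductively $X_k$ is the longest prefix of $X_kX_{k+1}\cdots$ (the remaining tail) lying in $\mathcal C_M\cup\Sigma$. The $M'$-decomposition is defined the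 same way using $\mathcal C_{M'}\cup\Sigma$. Define the bijection $g_0:\mathcal C_M\cup\Sigma\to\mathcal C_{M'}\cup\Sigma$ by $\tau\gamma^k\mapsto\kappa\alpha^{k-2}\kappa\gamma$ ($k\ge2$), $\kappa\alpha^k\kappa\gamma\mapsto\kappa\alpha^{k-1}\kappa\gamma\gamma$ ($k\ge1$), $\kappa\kappa\gamma\mapsto\tau\gamma\gamma$, $i\mapsto i$ ($i\in\Sigma$). Define $g:\Omega\to\Omega$ by $g(\mathbf x)=\prod_{j\ge1}g_0(X_j)$ (concatenation), where $(X_j)$ is the $M$-decomposition of $\mathbf x$. *)

theory Defs
  imports Main
begin

text \<open>Decompositions are indexed from 0
  (the paper's \<open>X_1\<close> is \<open>decomp D x 0\<close>).\<close>

definition Alph :: "nat \<Rightarrow> nat set" where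
  "Alph N = {1..N}"

definition letters :: "nat \<Rightarrow> nat list set" where
  "letters N = {[a] | a. a \<in> Alph N}"

definition Omega :: "nat \<Rightarrow> nat \<Rightarrow> (nat \<Rightarrow> nat) set" where
  "Omega N \<kappa> = {x. (\<forall>i. x i \<in> Alph N) \<and> (\<exists>n. \<forall>i\<ge>n. x i = \<kappa>)}"

definition CM :: "nat \<Rightarrow> nat \<Rightarrow> nat \<Rightarrow> nat \<Rightarrow> nat list set" where
  "CM \<tau> \<kappa> \<alpha> \<gamma> = {\<tau> # replicate k \<gamma> | k. k \<ge> 2}
     \<union> {\<kappa> # replicate k \<alpha> @ [\<kappa>, \<gamma>] | k. True}"

definition CM' :: "nat \<Rightarrow> nat \<Rightarrow> nat \<Rightarrow> nat \<Rightarrow> nat list set" where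
  "CM' \<tau> \<kappa> \<alpha> \<gamma> = {\<kappa> # replicate k \<alpha> @ [\<kappa>, \<gamma>] | k. True}
     \<union> {\<kappa> # replicate k \<alpha> @ [\<kappa>, \<gamma>, \<gamma>] | k. True}
     \<union> {[\<tau>, \<gamma>, \<gamma>]}"

definition dec_len :: "nat list set \<Rightarrow> (nat \<Rightarrow> nat) \<Rightarrow> nat" where
  "dec_len D x = (GREATEST n. 0 < n \<and> map x [0..<n] \<in> D)"

primrec dec_pos :: "nat list set \<Rightarrow> (nat \<Rightarrow> nat) \<Rightarrow> nat \<Rightarrow> nat" where
  "dec_pos D x 0 = 0"
| "dec_pos D x (Suc j) = dec_pos D x j + dec_len D (\<lambda>i. x (dec_pos D x j + i))"

text \<open>The \<open>D\<close>-decomposition: the j-th factor (0-indexed) of the greedy longest-prefix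
  parsing of \<open>x\<close> into words of \<open>D\<close>.\<close>
definition decomp :: "nat list set \<Rightarrow> (nat \<Rightarrow> nat) \<Rightarrow> nat \<Rightarrow> nat list" where
  "decomp D x j = map x [dec_pos D x j ..< dec_pos D x (Suc j)]"

definition starts :: "(nat \<Rightarrow> 'a list) \<Rightarrow> nat \<Rightarrow> nat" where
  "starts W j = (\<Sum>i<j. length (W i))"

definition inf_concat :: "(nat \<Rightarrow> 'a list) \<Rightarrow> nat \<Rightarrow> 'a" where
  "inf_concat W n = (let j = (LEAST j. n < starts W (Suc j)) in W j ! (n - starts W j))"

definition g0 :: "nat \<Rightarrow> nat \<Rightarrow> nat \<Rightarrow> nat \<Rightarrow> nat list \<Rightarrow> nat list" where
  "g0 \<tau> \<kappa> \<alpha> \<gamma> w =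
    (if \<exists>k\<ge>2. w = \<tau> # replicate k \<gamma> then \<kappa> # replicate (length w - 3) \<alpha> @ [\<kappa>, \<gamma>]
     else if \<exists>k\<ge>1. w = \<kappa> # replicate k \<alpha> @ [\<kappa>, \<gamma>]
       then \<kappa> # replicate (length w - 4) \<alpha> @ [\<kappa>, \<gamma>, \<gamma>]
     else if w = [\<kappa>, \<kappa>, \<gamma>] then [\<tau>, \<gamma>, \<gamma>]
     else w)"

definition g0_inv :: "nat \<Rightarrow> nat \<Rightarrow> nat \<Rightarrow> nat \<Rightarrow> nat \<Rightarrow> nat list \<Rightarrow> nat list" where
  "g0_inv N \<tau> \<kappa> \<alpha> \<gamma> = the_inv_into (CM \<tau> \<kappa> \<alpha> \<gamma> \<union> letters N) (g0 \<tau> \<kappa> \<alpha> \<gamma>)"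

definition gmap :: "nat \<Rightarrow> nat \<Rightarrow> nat \<Rightarrow> nat \<Rightarrow> nat \<Rightarrow> (nat \<Rightarrow> nat) \<Rightarrow> (nat \<Rightarrow> nat)" where
  "gmap N \<tau> \<kappa> \<alpha> \<gamma> x =
     inf_concat (\<lambda>j. g0 \<tau> \<kappa> \<alpha> \<gamma> (decomp (CM \<tau> \<kappa> \<alpha> \<gamma> \<union> letters N) x j))"

definition hmap :: "nat \<Rightarrow> nat \<Rightarrow> nat \<Rightarrow> nat \<Rightarrow> nat \<Rightarrow> (nat \<Rightarrow> nat) \<Rightarrow> (nat \<Rightarrow> nat)" where
  "hmap N \<tau> \<kappa> \<alpha> \<gamma> u =
     inf_concat (\<lambda>j. g0_inv N \<tau> \<kappa> \<alpha> \<gamma> (decomp (CM' \<tau> \<kappa> \<alpha> \<gamma> \<union> letters N) u j))"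

end

theory Submission
  imports Defs
begin


lemma dec_pos_mono: "dec_pos D x k \<le> dec_pos D x (k + j)"
  by (induction j) auto

lemma dec_pos_shift:
  "dec_pos D (\<lambda>i. x (dec_pos D x k + i)) j = dec_pos D x (k + j) - dec_pos D x k"
proof (induction j)
  case 0
  then show ?case by simp
next
  case (Suc j)
  have m: "dec_pos D x k \<le> dec_pos D x (k + j)" by (rule dec_pos_mono)
  have e: "(\<lambda>i. x (dec_pos D x k + (dec_pos D x (k + j) - dec_pos D x k + i)))
        = (\<lambda>i. x (dec_pos D x (k + j) + i))" using m by (simp add: add.assoc[symmetric])
  show ?case using Suc m e by simp
qed

lemma decomp_shift:
  "decomp D (\<lambda>i. x (dec_pos D x k + i)) j = decomp D x (k + j)"
proof -
  have m1: "dec_pos D x k \<le> dec_pos D x (k + j)" by (rule dec_pos_mono)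
  have m2: "dec_pos D x k \<le> dec_pos D x (k + Suc j)" by (rule dec_pos_mono)
  have m3: "dec_pos D x (k + j) \<le> dec_pos D x (k + Suc j)" by simp
  show ?thesis unfolding decomp_def dec_pos_shift
    using m1 m2 m3 by (auto simp: list_eq_iff_nth_eq)
qed

lemma dec_pos_1[simp]: "dec_pos D x (Suc 0) = dec_len D x"
  by simp

lemma decomp_0: "decomp D x 0 = map x [0..<dec_len D x]"
  by (simp add: decomp_def)

lemma decomp_Suc: "decomp D x (Suc j) = decomp D (\<lambda>i. x (dec_len D x + i)) j"
  using decomp_shift[of D x 1 j] by simp

lemma starts_Suc: "starts W (Suc j) = length (W 0) + starts (\<lambda>j. W (Suc j)) j"
  unfolding starts_def by (rule sum.lessThan_Suc_shift)

lemma starts_ge: "\<forall>j. W j \<noteq> [] \<Longrightarrow> j \<le> starts W j"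
proof (induction j)
  case 0 then show ?case by simp
next
  case (Suc j)
  have "starts W (Suc j) = starts W j + length (W j)" unfolding starts_def by simp
  moreover have "length (W j) \<ge> 1" using Suc.prems by (simp add: Suc_le_eq)
  ultimately show ?case using Suc by simp
qed

lemma inf_concat_unfold:
  assumes ne: "\<forall>j. W j \<noteq> []"
  shows "inf_concat W n = (if n < length (W 0) then W 0 ! n
          else inf_concat (\<lambda>j. W (Suc j)) (n - length (W 0)))"
proof (cases "n < length (W 0)")
  case True
  have "(LEAST j. n < starts W (Suc j)) = 0"
    by (rule Least_eq_0) (use True in \<open>simp add: starts_def\<close>)
  then show ?thesis using True by (simp add: inf_concat_def starts_def)
next
  case False
  let ?W = "\<lambda>j. W (Suc j)"
  have ne': "\<forall>j. ?W j \<noteq> []" using ne by simp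
  have ex: "n < starts W (Suc n)" using starts_ge[OF ne, of "Suc n"] by simp
  have L: "(LEAST j. n < starts W (Suc j)) = Suc (LEAST m. n < starts W (Suc (Suc m)))"
    by (rule Least_Suc[of "\<lambda>j. n < starts W (Suc j)", OF ex]) (use False in \<open>simp add: starts_def\<close>)
  have P: "(\<lambda>m. n < starts W (Suc (Suc m))) = (\<lambda>m. n - length (W 0) < starts ?W (Suc m))"
    using False by (auto simp: starts_Suc[of W])
  define M where "M = (LEAST m. n - length (W 0) < starts ?W (Suc m))"
  have LM: "(LEAST j. n < starts W (Suc j)) = Suc M" unfolding L P M_def ..
  have "inf_concat W n = W (Suc M) ! (n - starts W (Suc M))"
    unfolding inf_concat_def Let_def LM ..
  also have "\<dots> = ?W M ! (n - length (W 0) - starts ?W M)"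
    using starts_Suc[of W M] by (simp add: diff_diff_add)
  also have "\<dots> = inf_concat ?W (n - length (W 0))"
    unfolding inf_concat_def Let_def M_def ..
  finally show ?thesis using False by simp
qed

definition Gm :: "nat list set \<Rightarrow> (nat list \<Rightarrow> nat list) \<Rightarrow> (nat \<Rightarrow> nat) \<Rightarrow> nat \<Rightarrow> nat" where
  "Gm D f x = inf_concat (\<lambda>j. f (decomp D x j))"

lemma Gm_unfold:
  assumes "\<forall>j. f (decomp D x j) \<noteq> []"
  shows "Gm D f x n = (if n < length (f (map x [0..<dec_len D x]))
      then f (map x [0..<dec_len D x]) ! n
      else Gm D f (\<lambda>i. x (dec_len D x + i)) (n - length (f (map x [0..<dec_len D x]))))"
  unfolding Gm_def
  by (subst inf_concat_unfold) (use assms in \<open>simp_all add: decomp_0 decomp_Suc\<close>)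

lemma Gm_lt:
  assumes "\<forall>j. f (decomp D x j) \<noteq> []" "n < length (f (map x [0..<dec_len D x]))"
  shows "Gm D f x n = f (map x [0..<dec_len D x]) ! n"
  using Gm_unfold[OF assms(1), of n] assms(2) by simp

lemma Gm_ge:
  assumes "\<forall>j. f (decomp D x j) \<noteq> []"
  shows "Gm D f x (length (f (map x [0..<dec_len D x])) + n) = Gm D f (\<lambda>i. x (dec_len D x + i)) n"
  using Gm_unfold[OF assms(1), of "length (f (map x [0..<dec_len D x])) + n"] by simp

definition good :: "nat \<Rightarrow> nat \<Rightarrow> nat list set \<Rightarrow> bool" where
  "good N k D \<longleftrightarrow> letters N \<subseteq> D \<and> [] \<notin> D \<and> (\<forall>w\<in>D. length w \<ge> 2 \<longrightarrow> last w \<noteq> k)"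

lemma Omega_shift: "x \<in> Omega N k \<Longrightarrow> (\<lambda>i. x (p + i)) \<in> Omega N k"
  unfolding Omega_def by (auto intro: exI[of _ 0] le_add2 le_trans) (metis le_add2 le_trans)

lemma dec_len_eq:
  assumes "0 < L" "map x [0..<L] \<in> D" "\<forall>n>L. map x [0..<n] \<notin> D"
  shows "dec_len D x = L"
  unfolding dec_len_def
  by (rule Greatest_equality) (use assms in \<open>auto simp: not_less[symmetric]\<close>)

lemma dec_len_good:
  assumes x: "x \<in> Omega N k" and g: "good N k D"
  shows "0 < dec_len D x \<and> map x [0..<dec_len D x] \<in> D \<and> (\<forall>n>dec_len D x. map x [0..<n] \<notin> D)"
proof -
  obtain m where m: "\<forall>i\<ge>m. x i = k" and al: "\<forall>i. x i \<in> Alph N" using x unfolding Omega_def by auto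
  let ?P = "\<lambda>n. 0 < n \<and> map x [0..<n] \<in> D"
  have P1: "?P 1" using g al unfolding good_def letters_def by auto
  have bd: "n \<le> Suc m" if "?P n" for n
  proof (rule ccontr)
    assume "\<not> n \<le> Suc m"
    then have "length (map x [0..<n]) \<ge> 2" "last (map x [0..<n]) = k"
      using m by (auto simp: last_map)
    then show False using g that unfolding good_def by auto
  qed
  have "?P (dec_len D x)" unfolding dec_len_def by (rule GreatestI_nat[of ?P, OF P1 bd]) auto
  moreover have "\<forall>n>dec_len D x. map x [0..<n] \<notin> D"
  proof (intro allI impI)
    fix n assume "dec_len D x < n"
    then show "map x [0..<n] \<notin> D" using Greatest_le_nat[of ?P n "Suc m"] bd
      unfolding dec_len_def by fastforce
  qed
  ultimately show ?thesis by blast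
qed

lemma decomp_good:
  assumes x: "x \<in> Omega N k" and g: "good N k D"
  shows "decomp D x j \<in> D"
proof -
  have "decomp D x j = decomp D (\<lambda>i. x (dec_pos D x j + i)) 0"
    using decomp_shift[of D x j 0] by simp
  also have "\<dots> \<in> D" unfolding decomp_0
    using dec_len_good[OF Omega_shift[OF x] g] by blast
  finally show ?thesis .
qed


lemma good_ne: "good N k D \<Longrightarrow> w \<in> D \<Longrightarrow> w \<noteq> []"
  unfolding good_def by auto

lemma Omega_kappa: "x \<in> Omega N k \<Longrightarrow> k \<in> Alph N"
proof -
  assume "x \<in> Omega N k"
  then obtain m where "\<forall>i\<ge>m. x i = k" "\<forall>i. x i \<in> Alph N" unfolding Omega_def by blast
  then show "k \<in> Alph N" by (metis order_refl)
qed

lemma inf_concat_decomp: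
  assumes g: "good N k D"
  shows "\<forall>x. x \<in> Omega N k \<longrightarrow> inf_concat (decomp D x) n = x n"
proof (induction n rule: less_induct)
  case (less n)
  show ?case
  proof (intro allI impI)
    fix x assume x: "x \<in> Omega N k"
    let ?L = "dec_len D x"
    have L: "0 < ?L" using dec_len_good[OF x g] by blast
    have ne: "\<forall>j. decomp D x j \<noteq> []" using decomp_good[OF x g] good_ne[OF g] by blast
    have e: "(\<lambda>j. decomp D x (Suc j)) = decomp D (\<lambda>i. x (?L + i))"
      by (rule ext) (simp add: decomp_Suc)
    show "inf_concat (decomp D x) n = x n"
    proof (cases "n < ?L")
      case True
      then show ?thesis by (subst inf_concat_unfold[OF ne]) (simp add: decomp_0)
    next
      case False
      have "inf_concat (decomp D x) n = inf_concat (decomp D (\<lambda>i. x (?L + i))) (n - ?L)"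
        using False by (subst inf_concat_unfold[OF ne]) (simp add: decomp_0 e)
      also have "\<dots> = x (?L + (n - ?L))"
        using less.IH[of "n - ?L"] L False Omega_shift[OF x] by simp
      finally show ?thesis using False by simp
    qed
  qed
qed

lemma Gm_Omega:
  assumes x: "x \<in> Omega N k" and g: "good N k D"
    and hf: "\<forall>w\<in>D. set w \<subseteq> Alph N \<longrightarrow> f w \<noteq> [] \<and> set (f w) \<subseteq> Alph N"
    and fk: "f [k] = [k]"
  shows "Gm D f x \<in> Omega N k"
proof -
  have blk: "\<forall>j. f (decomp D y j) \<noteq> [] \<and> set (f (decomp D y j)) \<subseteq> Alph N"
    if y: "y \<in> Omega N k" for y
  proof
    fix j
    have "set (decomp D y j) \<subseteq> Alph N" using y unfolding decomp_def Omega_def by auto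
    then show "f (decomp D y j) \<noteq> [] \<and> set (f (decomp D y j)) \<subseteq> Alph N"
      using hf decomp_good[OF y g] by blast
  qed
  have blk0: "f (map y [0..<dec_len D y]) \<noteq> [] \<and> set (f (map y [0..<dec_len D y])) \<subseteq> Alph N"
    if y: "y \<in> Omega N k" for y
    using blk[OF y, rule_format, of 0] by (simp add: decomp_0)
  have A: "\<forall>y. y \<in> Omega N k \<longrightarrow> Gm D f y n \<in> Alph N" for n
  proof (induction n rule: less_induct)
    case (less n)
    show ?case
    proof (intro allI impI)
      fix y assume y: "y \<in> Omega N k"
      let ?B = "f (map y [0..<dec_len D y])"
      have ne: "\<forall>j. f (decomp D y j) \<noteq> []" using blk[OF y] by blast
      show "Gm D f y n \<in> Alph N"
      proof (cases "n < length ?B")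
        case True
        then show ?thesis using blk0[OF y] by (subst Gm_unfold[OF ne]) auto
      next
        case False
        have pos: "length ?B > 0" using blk0[OF y] by simp
        have lt: "n - length ?B < n" using False pos by arith
        have "Gm D f y n = Gm D f (\<lambda>i. y (dec_len D y + i)) (n - length ?B)"
          using Gm_ge[OF ne, of "n - length ?B"] False by simp
        then show ?thesis using less.IH[rule_format, OF lt Omega_shift[OF y]] by simp
      qed
    qed
  qed
  have kA: "k \<in> Alph N" using Omega_kappa[OF x] .
  have ck: "(\<lambda>_. k) \<in> Omega N k" using kA unfolding Omega_def by auto
  have dl: "dec_len D (\<lambda>_. k) = 1"
  proof (rule dec_len_eq)
    show "map (\<lambda>_. k) [0..<1] \<in> D" using g kA unfolding good_def letters_def by auto
    show "\<forall>n>1. map (\<lambda>_. k) [0..<n] \<notin> D"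
    proof (intro allI impI)
      fix n :: nat assume "1 < n"
      then show "map (\<lambda>_. k) [0..<n] \<notin> D" using g unfolding good_def
        by (auto simp: last_map)
    qed
  qed simp
  have C: "Gm D f (\<lambda>_. k) n = k" for n
  proof (induction n)
    case 0
    show ?case using blk[OF ck] by (subst Gm_unfold) (auto simp: dl fk)
  next
    case (Suc n)
    show ?case using blk[OF ck] Suc by (subst Gm_unfold) (auto simp: dl fk)
  qed
  have E: "\<forall>y. y \<in> Omega N k \<longrightarrow> (\<forall>i\<ge>m. y i = k) \<longrightarrow> (\<exists>m'. \<forall>i\<ge>m'. Gm D f y i = k)" for m
  proof (induction m rule: less_induct)
    case (less m)
    show ?case
    proof (intro allI impI)
      fix y assume y: "y \<in> Omega N k" and ym: "\<forall>i\<ge>m. y i = k"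
      show "\<exists>m'. \<forall>i\<ge>m'. Gm D f y i = k"
      proof (cases "m = 0")
        case True
        then have "y = (\<lambda>_. k)" using ym by auto
        then show ?thesis using C by auto
      next
        case False
        let ?L = "dec_len D y"
        let ?B = "f (map y [0..<dec_len D y])"
        have L: "0 < ?L" using dec_len_good[OF y g] by blast
        have ne: "\<forall>j. f (decomp D y j) \<noteq> []" using blk[OF y] by blast
        have yk: "\<forall>i\<ge>m - ?L. y (?L + i) = k" using ym by auto
        have lt: "m - ?L < m" using False L by arith
        obtain m' where m': "\<forall>i\<ge>m'. Gm D f (\<lambda>i. y (?L + i)) i = k"
          using less.IH[of "m - ?L"] lt Omega_shift[OF y, of ?L] yk by blast
        have "\<forall>i\<ge>m' + length ?B. Gm D f y i = k"
        proof (intro allI impI)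
          fix i assume "m' + length ?B \<le> i"
          then show "Gm D f y i = k" using m' by (subst Gm_unfold[OF ne]) auto
        qed
        then show ?thesis by blast
      qed
    qed
  qed
  obtain m where "\<forall>i\<ge>m. x i = k" using x unfolding Omega_def by auto
  then show ?thesis using A E x unfolding Omega_def by blast
qed

lemma decomp_Gm:
  assumes g: "good N k D" and g': "good N k D'" and hf: "\<forall>w\<in>D. f w \<noteq> []"
    and hA: "\<forall>y\<in>Omega N k. dec_len D' (Gm D f y) = length (f (map y [0..<dec_len D y]))"
  shows "\<forall>y\<in>Omega N k. decomp D' (Gm D f y) j = f (decomp D y j)"
proof (induction j)
  case 0
  show ?case
  proof
    fix y assume y: "y \<in> Omega N k"
    have ne: "\<forall>j. f (decomp D y j) \<noteq> []" using hf decomp_good[OF y g] by blast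
    have "map (Gm D f y) [0..<length (f (map y [0..<dec_len D y]))] = f (map y [0..<dec_len D y])"
    proof (rule nth_equalityI)
      fix i assume "i < length (map (Gm D f y) [0..<length (f (map y [0..<dec_len D y]))])"
      then have "i < length (f (map y [0..<dec_len D y]))" by simp
      then show "map (Gm D f y) [0..<length (f (map y [0..<dec_len D y]))] ! i = f (map y [0..<dec_len D y]) ! i"
        using Gm_lt[OF ne, of i] by simp
    qed simp
    then show "decomp D' (Gm D f y) 0 = f (decomp D y 0)"
      unfolding decomp_0 hA[rule_format, OF y] .
  qed
next
  case (Suc j)
  show ?case
  proof
    fix y assume y: "y \<in> Omega N k"
    have ne: "\<forall>j. f (decomp D y j) \<noteq> []" using hf decomp_good[OF y g] by blast
    have e: "(\<lambda>i. Gm D f y (dec_len D' (Gm D f y) + i)) = Gm D f (\<lambda>i. y (dec_len D y + i))"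
      unfolding hA[rule_format, OF y]
      by (rule ext) (rule Gm_ge[OF ne])
    show "decomp D' (Gm D f y) (Suc j) = f (decomp D y (Suc j))"
      unfolding decomp_Suc e using Suc Omega_shift[OF y] by blast
  qed
qed



definition g0' :: "nat \<Rightarrow> nat \<Rightarrow> nat \<Rightarrow> nat \<Rightarrow> nat list \<Rightarrow> nat list" where
  "g0' \<tau> \<kappa> \<alpha> \<gamma> w =
    (if w = [\<tau>, \<gamma>, \<gamma>] then [\<kappa>, \<kappa>, \<gamma>]
     else if \<exists>k. w = \<kappa> # replicate k \<alpha> @ [\<kappa>, \<gamma>, \<gamma>] then \<kappa> # replicate (length w - 3) \<alpha> @ [\<kappa>, \<gamma>]
     else if \<exists>k. w = \<kappa> # replicate k \<alpha> @ [\<kappa>, \<gamma>] then \<tau> # replicate (length w - 1) \<gamma>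
     else w)"

lemma nth_shape:
  "(c # replicate k a @ ws) ! i = (if i = 0 then c else if i \<le> k then a else ws ! (i - Suc k))"
  by (cases i) (auto simp: nth_append)

lemma map_eq_iff: "map y [0..<n] = w \<longleftrightarrow> n = length w \<and> (\<forall>i<n. y i = w ! i)"
  by (auto simp: list_eq_iff_nth_eq)

lemma map_shape_D:
  assumes "map y [0..<n] = c # replicate j a @ ws"
  shows "n = Suc j + length ws \<and> y 0 = c \<and> (\<forall>i. 1 \<le> i \<and> i \<le> j \<longrightarrow> y i = a)
     \<and> (\<forall>i<length ws. y (Suc j + i) = ws ! i)"
proof -
  have n: "n = Suc j + length ws" and yy: "\<forall>i<n. y i = (c # replicate j a @ ws) ! i"
    using assms unfolding map_eq_iff by auto
  show ?thesis using n yy[rule_format, of 0] yy[unfolded nth_shape]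
    by (auto simp: nth_shape)
qed

lemma map_shape_I:
  assumes "y 0 = c" "\<forall>i. 1 \<le> i \<and> i \<le> j \<longrightarrow> y i = a" "\<forall>i<length ws. y (Suc j + i) = ws ! i"
    "n = Suc j + length ws"
  shows "map y [0..<n] = c # replicate j a @ ws"
  unfolding map_eq_iff
proof (intro conjI allI impI)
  show "n = length (c # replicate j a @ ws)" using assms by simp
  fix i assume "i < n"
  show "y i = (c # replicate j a @ ws) ! i"
  proof (cases "i = 0")
    case True then show ?thesis using assms by simp
  next
    case False
    show ?thesis
    proof (cases "i \<le> j")
      case True then show ?thesis using assms False by (simp add: nth_shape)
    next
      case F2: False
      then have "i = Suc j + (i - Suc j)" "i - Suc j < length ws" using \<open>i < n\<close> assms(4) by auto
      then show ?thesis using assms(3) F2 False by (metis nth_shape)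
    qed
  qed
qed

lemma map3_D: "map y [0..<n] = [a, b, c] \<Longrightarrow> n = 3 \<and> y 0 = a \<and> y 1 = b \<and> y 2 = c"
  unfolding map_eq_iff by (auto simp: numeral_eq_Suc)

locale setting =
  fixes N \<tau> \<kappa> \<alpha> \<gamma> :: nat
  assumes tA: "\<tau> \<in> Alph N" and kA: "\<kappa> \<in> Alph N" and aA: "\<alpha> \<in> Alph N" and gA: "\<gamma> \<in> Alph N"
    and tk: "\<tau> \<noteq> \<kappa>" and tg: "\<tau> \<noteq> \<gamma>" and ka: "\<kappa> \<noteq> \<alpha>" and kg: "\<kappa> \<noteq> \<gamma>" and ag: "\<alpha> \<noteq> \<gamma>"
begin

abbreviation "D1 \<equiv> CM \<tau> \<kappa> \<alpha> \<gamma> \<union> letters N"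
abbreviation "D2 \<equiv> CM' \<tau> \<kappa> \<alpha> \<gamma> \<union> letters N"
abbreviation "Om \<equiv> Omega N \<kappa>"
abbreviation "f1 \<equiv> g0 \<tau> \<kappa> \<alpha> \<gamma>"
abbreviation "f2 \<equiv> g0' \<tau> \<kappa> \<alpha> \<gamma>"

lemma neq23: "\<kappa> # replicate k \<alpha> @ [\<kappa>, \<gamma>] \<noteq> \<kappa> # replicate j \<alpha> @ [\<kappa>, \<gamma>, \<gamma>]"
proof
  assume "\<kappa> # replicate k \<alpha> @ [\<kappa>, \<gamma>] = \<kappa> # replicate j \<alpha> @ [\<kappa>, \<gamma>, \<gamma>]"
  then have "rev (\<kappa> # replicate k \<alpha> @ [\<kappa>, \<gamma>]) = rev (\<kappa> # replicate j \<alpha> @ [\<kappa>, \<gamma>, \<gamma>])" by simp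
  then show False using kg by simp
qed

lemma lastCM: "w \<in> CM \<tau> \<kappa> \<alpha> \<gamma> \<Longrightarrow> last w = \<gamma> \<and> length w \<ge> 3"
  unfolding CM_def by auto

lemma lastCM': "w \<in> CM' \<tau> \<kappa> \<alpha> \<gamma> \<Longrightarrow> last w = \<gamma> \<and> length w \<ge> 3"
  unfolding CM'_def by auto

lemma len_letters: "w \<in> letters N \<Longrightarrow> length w = 1"
  unfolding letters_def by auto

lemma good1: "good N \<kappa> D1"
  unfolding good_def using lastCM len_letters kg by fastforce

lemma good2: "good N \<kappa> D2"
  unfolding good_def using lastCM' len_letters kg by fastforce

lemma g0_A: "2 \<le> k \<Longrightarrow> f1 (\<tau> # replicate k \<gamma>) = \<kappa> # replicate (k - 2) \<alpha> @ [\<kappa>, \<gamma>]"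
  unfolding g0_def by auto

lemma g0_B: "1 \<le> k \<Longrightarrow> f1 (\<kappa> # replicate k \<alpha> @ [\<kappa>, \<gamma>]) = \<kappa> # replicate (k - 1) \<alpha> @ [\<kappa>, \<gamma>, \<gamma>]"
  unfolding g0_def using tk by auto

lemma g0_C: "f1 [\<kappa>, \<kappa>, \<gamma>] = [\<tau>, \<gamma>, \<gamma>]"
proof -
  have "\<not> (\<exists>k\<ge>1. [\<kappa>, \<kappa>, \<gamma>] = \<kappa> # replicate k \<alpha> @ [\<kappa>, \<gamma>])"
  proof
    assume "\<exists>k\<ge>1. [\<kappa>, \<kappa>, \<gamma>] = \<kappa> # replicate k \<alpha> @ [\<kappa>, \<gamma>]"
    then obtain k where "k \<ge> 1" "[\<kappa>, \<kappa>, \<gamma>] = \<kappa> # replicate k \<alpha> @ [\<kappa>, \<gamma>]" by blast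
    then have "length [\<kappa>, \<kappa>, \<gamma>] = length (\<kappa> # replicate k \<alpha> @ [\<kappa>, \<gamma>])" by simp
    then show False using \<open>k \<ge> 1\<close> by simp
  qed
  then show ?thesis unfolding g0_def using tk by auto
qed

lemma g0_D: "f1 [c] = [c]"
  unfolding g0_def by auto

lemma g0'_A: "f2 [\<tau>, \<gamma>, \<gamma>] = [\<kappa>, \<kappa>, \<gamma>]"
  unfolding g0'_def by simp

lemma g0'_B: "f2 (\<kappa> # replicate k \<alpha> @ [\<kappa>, \<gamma>, \<gamma>]) = \<kappa> # replicate (Suc k) \<alpha> @ [\<kappa>, \<gamma>]"
  unfolding g0'_def using tk by auto

lemma g0'_C: "f2 (\<kappa> # replicate k \<alpha> @ [\<kappa>, \<gamma>]) = \<tau> # replicate (k + 2) \<gamma>"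
  unfolding g0'_def using tk neq23 by auto

lemma g0'_D: "f2 [c] = [c]"
  unfolding g0'_def by auto

lemma D1_cases:
  assumes "w \<in> D1"
  obtains k where "2 \<le> k" "w = \<tau> # replicate k \<gamma>"
  | k where "1 \<le> k" "w = \<kappa> # replicate k \<alpha> @ [\<kappa>, \<gamma>]"
  | "w = [\<kappa>, \<kappa>, \<gamma>]"
  | c where "w = [c]"
proof -
  consider (a) "\<exists>k\<ge>2. w = \<tau> # replicate k \<gamma>" | (b) "\<exists>k. w = \<kappa> # replicate k \<alpha> @ [\<kappa>, \<gamma>]"
    | (c) "\<exists>c. w = [c]"
    using assms unfolding CM_def letters_def by blast
  then show ?thesis
  proof cases
    case b
    then obtain k where k: "w = \<kappa> # replicate k \<alpha> @ [\<kappa>, \<gamma>]" by blast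
    show ?thesis
    proof (cases k)
      case 0 then show ?thesis using k that by simp
    next
      case (Suc m) then show ?thesis by (intro that(2)[of k]) (use k in auto)
    qed
  qed (use that in blast)+
qed

lemma CM_cases:
  assumes "w \<in> CM \<tau> \<kappa> \<alpha> \<gamma>"
  obtains k where "2 \<le> k" "w = \<tau> # replicate k \<gamma>"
  | k where "w = \<kappa> # replicate k \<alpha> @ [\<kappa>, \<gamma>]"
  using assms unfolding CM_def by blast

lemma D2_cases:
  assumes "w \<in> D2"
  obtains "w = [\<tau>, \<gamma>, \<gamma>]"
  | k where "w = \<kappa> # replicate k \<alpha> @ [\<kappa>, \<gamma>, \<gamma>]"
  | k where "w = \<kappa> # replicate k \<alpha> @ [\<kappa>, \<gamma>]"
  | c where "w = [c]"
  using assms unfolding CM'_def letters_def by blast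

lemma CM'_cases:
  assumes "w \<in> CM' \<tau> \<kappa> \<alpha> \<gamma>"
  obtains "w = [\<tau>, \<gamma>, \<gamma>]"
  | k where "w = \<kappa> # replicate k \<alpha> @ [\<kappa>, \<gamma>, \<gamma>]"
  | k where "w = \<kappa> # replicate k \<alpha> @ [\<kappa>, \<gamma>]"
  using assms unfolding CM'_def by blast

lemma f1_in: assumes w: "w \<in> D1" shows "f1 w \<in> D2"
  using w proof (cases rule: D1_cases)
  fix k assume "2 \<le> k" "w = \<tau> # replicate k \<gamma>"
  then show "f1 w \<in> D2" by (simp add: g0_A CM'_def)
next
  fix k assume "1 \<le> k" "w = \<kappa> # replicate k \<alpha> @ [\<kappa>, \<gamma>]"
  then show "f1 w \<in> D2" by (simp add: g0_B CM'_def)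
next
  assume "w = [\<kappa>, \<kappa>, \<gamma>]"
  then show "f1 w \<in> D2" by (simp add: g0_C CM'_def)
next
  fix c assume "w = [c]"
  then show "f1 w \<in> D2" using w lastCM by (fastforce simp: g0_D)
qed

lemma f2_in: assumes w: "w \<in> D2" shows "f2 w \<in> D1"
  using w proof (cases rule: D2_cases)
  assume "w = [\<tau>, \<gamma>, \<gamma>]"
  then show "f2 w \<in> D1" using g0'_A CM_def by (simp add: CM_def)
next
  fix k assume "w = \<kappa> # replicate k \<alpha> @ [\<kappa>, \<gamma>, \<gamma>]"
  then show "f2 w \<in> D1" by (simp add: g0'_B CM_def) (metis replicate_Suc)
next
  fix k assume "w = \<kappa> # replicate k \<alpha> @ [\<kappa>, \<gamma>]"
  then have "f2 w = \<tau> # replicate (k + 2) \<gamma>" by (simp only: g0'_C)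
  then show "f2 w \<in> D1" using le_add2[of 2 k] unfolding CM_def by blast
next
  fix c assume "w = [c]"
  then show "f2 w \<in> D1" using w lastCM' by (fastforce simp: g0'_D)
qed

lemma f21: "w \<in> D1 \<Longrightarrow> f2 (f1 w) = w"
proof (erule D1_cases)
  fix k assume "2 \<le> k" "w = \<tau> # replicate k \<gamma>"
  moreover have "k - 2 + 2 = k" using \<open>2 \<le> k\<close> by simp
  ultimately show "f2 (f1 w) = w" by (simp add: g0_A g0'_C)
next
  fix k assume "1 \<le> k" "w = \<kappa> # replicate k \<alpha> @ [\<kappa>, \<gamma>]"
  then show "f2 (f1 w) = w" by (simp add: g0_B g0'_B)
next
  assume "w = [\<kappa>, \<kappa>, \<gamma>]"
  then show "f2 (f1 w) = w" by (simp add: g0_C g0'_A)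
next
  fix c assume "w = [c]"
  then show "f2 (f1 w) = w" by (simp add: g0_D g0'_D)
qed

lemma f12: "w \<in> D2 \<Longrightarrow> f1 (f2 w) = w"
proof (erule D2_cases)
  assume "w = [\<tau>, \<gamma>, \<gamma>]"
  then show "f1 (f2 w) = w" by (simp add: g0_C g0'_A)
next
  fix k assume "w = \<kappa> # replicate k \<alpha> @ [\<kappa>, \<gamma>, \<gamma>]"
  then show "f1 (f2 w) = w" using g0_B[of "Suc k"] by (simp add: g0'_B)
next
  fix k assume "w = \<kappa> # replicate k \<alpha> @ [\<kappa>, \<gamma>]"
  then show "f1 (f2 w) = w" using g0_A[of "k+2"] by (simp add: g0'_C)
next
  fix c assume "w = [c]"
  then show "f1 (f2 w) = w" by (simp add: g0_D g0'_D)
qed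

lemma inj_f1: "inj_on f1 D1"
  by (rule inj_on_inverseI[where g = f2]) (rule f21)

lemma g0_inv_eq: "w \<in> D2 \<Longrightarrow> g0_inv N \<tau> \<kappa> \<alpha> \<gamma> w = f2 w"
  unfolding g0_inv_def by (rule the_inv_into_f_eq[OF inj_f1 f12 f2_in])

end


context setting begin

definition okf :: "nat list set \<Rightarrow> (nat list \<Rightarrow> nat list) \<Rightarrow> bool" where
  "okf D f \<longleftrightarrow> good N \<kappa> D \<and> (\<forall>c. f [c] = [c]) \<and> (\<forall>w\<in>D. f w \<noteq> []) \<and>
     (\<forall>w\<in>D. 2 \<le> length w \<longrightarrow> 2 \<le> length (f w) \<and>
        ((f w ! 0 = \<kappa> \<and> (f w ! 1 = \<alpha> \<or> f w ! 1 = \<kappa>)) \<or> (f w ! 0 = \<tau> \<and> f w ! 1 = \<gamma>)))"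

lemma okf_ne: "okf D f \<Longrightarrow> z \<in> Om \<Longrightarrow> \<forall>j. f (decomp D z j) \<noteq> []"
  unfolding okf_def using decomp_good by blast

lemma Gm_first:
  assumes ok: "okf D f" and z: "z \<in> Om"
  shows "(Gm D f z 0 = z 0 \<and> (\<forall>n. Gm D f z (Suc n) = Gm D f (\<lambda>i. z (Suc i)) n))
    \<or> (Gm D f z 0 = \<kappa> \<and> (Gm D f z 1 = \<alpha> \<or> Gm D f z 1 = \<kappa>))
    \<or> (Gm D f z 0 = \<tau> \<and> Gm D f z 1 = \<gamma>)"
proof -
  have gD: "good N \<kappa> D" and f1c: "\<forall>c. f [c] = [c]"
    and fL: "\<forall>w\<in>D. 2 \<le> length w \<longrightarrow> 2 \<le> length (f w) \<and>
        ((f w ! 0 = \<kappa> \<and> (f w ! 1 = \<alpha> \<or> f w ! 1 = \<kappa>)) \<or> (f w ! 0 = \<tau> \<and> f w ! 1 = \<gamma>))"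
    using ok unfolding okf_def by auto
  have ne: "\<forall>j. f (decomp D z j) \<noteq> []" using okf_ne[OF ok z] .
  define L where "L = dec_len D z"
  define B where "B = map z [0..<L]"
  have L0: "0 < L" and BD: "B \<in> D" using dec_len_good[OF z gD] unfolding L_def B_def by auto
  show ?thesis
  proof (cases "L = 1")
    case True
    then have B1: "B = [z 0]" unfolding B_def by simp
    have "Gm D f z 0 = z 0" using Gm_lt[OF ne, of 0] B1 f1c unfolding B_def L_def by simp
    moreover have "Gm D f z (Suc n) = Gm D f (\<lambda>i. z (Suc i)) n" for n
      using Gm_ge[OF ne, of n] B1 f1c True unfolding B_def L_def by simp
    ultimately show ?thesis by blast
  next
    case False
    then have "2 \<le> length B" using L0 unfolding B_def by simp
    then have fB: "2 \<le> length (f B) \<and>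
        ((f B ! 0 = \<kappa> \<and> (f B ! 1 = \<alpha> \<or> f B ! 1 = \<kappa>)) \<or> (f B ! 0 = \<tau> \<and> f B ! 1 = \<gamma>))"
      using fL BD by blast
    have l0: "0 < length (f (map z [0..<dec_len D z]))" "1 < length (f (map z [0..<dec_len D z]))"
      using fB unfolding B_def L_def by linarith+
    have e0: "Gm D f z 0 = f B ! 0" unfolding B_def L_def
      by (rule Gm_lt[OF ne l0(1)])
    have e1: "Gm D f z 1 = f B ! 1" unfolding B_def L_def
      by (rule Gm_lt[OF ne l0(2)])
    show ?thesis using fB unfolding e0 e1 by blast
  qed
qed

lemma Gm_gamma:
  assumes ok: "okf D f" and z: "z \<in> Om" and g: "Gm D f z 0 = \<gamma>"
  shows "z 0 = \<gamma> \<and> (\<forall>n. Gm D f z (Suc n) = Gm D f (\<lambda>i. z (Suc i)) n)"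
  using Gm_first[OF ok z] g kg tg by auto

lemma Gm_gg:
  assumes ok: "okf D f" and z: "z \<in> Om" and g: "Gm D f z 0 = \<gamma>" "Gm D f z 1 = \<gamma>"
  shows "z 0 = \<gamma> \<and> z 1 = \<gamma>"
proof -
  have a: "z 0 = \<gamma>" and b: "Gm D f (\<lambda>i. z (Suc i)) 0 = \<gamma>"
    using Gm_gamma[OF ok z g(1)] g(2) by (auto simp: One_nat_def)
  have "(\<lambda>i. z (Suc i)) \<in> Om" using Omega_shift[OF z, of 1] by simp
  then have "z (Suc 0) = \<gamma>" using Gm_gamma[OF ok _ b] by simp
  then show ?thesis using a by simp
qed

lemma Gm_run:
  assumes ok: "okf D f"
  shows "\<forall>z\<in>Om. (\<forall>i<j. Gm D f z i = \<alpha>) \<and> Gm D f z j = \<kappa> \<and> Gm D f z (Suc j) = \<gamma> \<longrightarrow>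
     (\<forall>i<j. z i = \<alpha>) \<and> z j = \<kappa> \<and> z (Suc j) = \<gamma>"
proof (induction j)
  case 0
  show ?case
  proof (intro ballI impI)
    fix z assume z: "z \<in> Om" and h: "(\<forall>i<0. Gm D f z i = \<alpha>) \<and> Gm D f z 0 = \<kappa> \<and> Gm D f z (Suc 0) = \<gamma>"
    have z': "(\<lambda>i. z (Suc i)) \<in> Om" using Omega_shift[OF z, of 1] by simp
    have "z 0 = \<kappa> \<and> Gm D f (\<lambda>i. z (Suc i)) 0 = \<gamma>"
    proof -
      have "\<not> (Gm D f z 0 = \<kappa> \<and> (Gm D f z 1 = \<alpha> \<or> Gm D f z 1 = \<kappa>))" using h ag kg by auto
      moreover have "\<not> (Gm D f z 0 = \<tau> \<and> Gm D f z 1 = \<gamma>)" using h tk by auto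
      ultimately have "Gm D f z 0 = z 0 \<and> (\<forall>n. Gm D f z (Suc n) = Gm D f (\<lambda>i. z (Suc i)) n)"
        using Gm_first[OF ok z] by argo
      then show ?thesis using h by auto
    qed
    then show "(\<forall>i<0. z i = \<alpha>) \<and> z 0 = \<kappa> \<and> z (Suc 0) = \<gamma>"
      using Gm_gamma[OF ok z'] by auto
  qed
next
  case (Suc j)
  show ?case
  proof (intro ballI impI)
    fix z assume z: "z \<in> Om" and h: "(\<forall>i<Suc j. Gm D f z i = \<alpha>) \<and> Gm D f z (Suc j) = \<kappa> \<and> Gm D f z (Suc (Suc j)) = \<gamma>"
    have z': "(\<lambda>i. z (Suc i)) \<in> Om" using Omega_shift[OF z, of 1] by simp
    have h0: "Gm D f z 0 = \<alpha>" using h by blast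
    have h1: "Gm D f z 1 = \<alpha> \<or> Gm D f z 1 = \<kappa>" using h by (cases j) auto
    have fst: "z 0 = \<alpha> \<and> (\<forall>n. Gm D f z (Suc n) = Gm D f (\<lambda>i. z (Suc i)) n)"
    proof -
      have "\<not> (Gm D f z 0 = \<kappa> \<and> (Gm D f z 1 = \<alpha> \<or> Gm D f z 1 = \<kappa>))" using h0 ka by simp
      moreover have "\<not> (Gm D f z 0 = \<tau> \<and> Gm D f z 1 = \<gamma>)" using h1 ag kg by auto
      ultimately show ?thesis using Gm_first[OF ok z] h0 by argo
    qed
    have sh: "\<And>n. Gm D f z (Suc n) = Gm D f (\<lambda>i. z (Suc i)) n" using fst by blast
    have hs: "(\<forall>i<j. Gm D f (\<lambda>i. z (Suc i)) i = \<alpha>) \<and> Gm D f (\<lambda>i. z (Suc i)) j = \<kappa>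
       \<and> Gm D f (\<lambda>i. z (Suc i)) (Suc j) = \<gamma>"
    proof (intro conjI allI impI)
      fix i assume "i < j" then show "Gm D f (\<lambda>i. z (Suc i)) i = \<alpha>" using h sh[of i, symmetric] by simp
    next
      show "Gm D f (\<lambda>i. z (Suc i)) j = \<kappa>" using h sh[of j, symmetric] by simp
    next
      show "Gm D f (\<lambda>i. z (Suc i)) (Suc j) = \<gamma>" using h sh[of "Suc j", symmetric] by simp
    qed
    have r: "(\<forall>i<j. z (Suc i) = \<alpha>) \<and> z (Suc j) = \<kappa> \<and> z (Suc (Suc j)) = \<gamma>"
      using Suc.IH[rule_format, OF z' hs] by simp
    show "(\<forall>i<Suc j. z i = \<alpha>) \<and> z (Suc j) = \<kappa> \<and> z (Suc (Suc j)) = \<gamma>"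
    proof (intro conjI allI impI)
      fix i assume i: "i < Suc j"
      show "z i = \<alpha>"
      proof (cases i)
        case 0 then show ?thesis using fst by simp
      next
        case (Suc i') then show ?thesis using r i by simp
      qed
    qed (use r in simp)+
  qed
qed

lemma okf1_aux:
  assumes w: "w \<in> D1" and l: "2 \<le> length w"
  shows "2 \<le> length (f1 w) \<and> ((f1 w ! 0 = \<kappa> \<and> (f1 w ! 1 = \<alpha> \<or> f1 w ! 1 = \<kappa>)) \<or> (f1 w ! 0 = \<tau> \<and> f1 w ! 1 = \<gamma>))"
  using w
proof (cases rule: D1_cases)
  case (1 k)
  have fw: "f1 w = \<kappa> # replicate (k - 2) \<alpha> @ [\<kappa>, \<gamma>]" using 1 by (simp add: g0_A)
  show ?thesis unfolding fw by (cases "k - 2") (simp_all add: nth_append)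
next
  case (2 k)
  have fw: "f1 w = \<kappa> # replicate (k - 1) \<alpha> @ [\<kappa>, \<gamma>, \<gamma>]" using 2 by (simp add: g0_B)
  show ?thesis unfolding fw by (cases "k - 1") (simp_all add: nth_append)
next
  case 3 then show ?thesis by (simp add: g0_C)
next
  case (4 c) then show ?thesis using l by simp
qed

lemma okf2_aux:
  assumes w: "w \<in> D2" and l: "2 \<le> length w"
  shows "2 \<le> length (f2 w) \<and> ((f2 w ! 0 = \<kappa> \<and> (f2 w ! 1 = \<alpha> \<or> f2 w ! 1 = \<kappa>)) \<or> (f2 w ! 0 = \<tau> \<and> f2 w ! 1 = \<gamma>))"
  using w
proof (cases rule: D2_cases)
  case 1 then show ?thesis by (simp add: g0'_A)
next
  case (2 k)
  have fw: "f2 w = \<kappa> # replicate (Suc k) \<alpha> @ [\<kappa>, \<gamma>]" using 2 by (simp only: g0'_B)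
  show ?thesis unfolding fw by simp
next
  case (3 k)
  have fw: "f2 w = \<tau> # replicate (k + 2) \<gamma>" using 3 by (simp only: g0'_C)
  show ?thesis unfolding fw by simp
next
  case (4 c) then show ?thesis using l by simp
qed

lemma okf1: "okf D1 f1"
proof -
  have "\<forall>w\<in>D1. f1 w \<noteq> []" using f1_in good2 good_ne by metis
  then show ?thesis unfolding okf_def using good1 g0_D okf1_aux by simp
qed

lemma okf2: "okf D2 f2"
proof -
  have "\<forall>w\<in>D2. f2 w \<noteq> []" using f2_in good1 good_ne by metis
  then show ?thesis unfolding okf_def using good2 g0'_D okf2_aux by simp
qed

end


context setting begin

lemma CM_mem_tau:
  assumes "y 0 = \<tau>" "\<forall>i. 1 \<le> i \<and> i \<le> k \<longrightarrow> y i = \<gamma>" "2 \<le> k"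
  shows "map y [0..<Suc k] \<in> CM \<tau> \<kappa> \<alpha> \<gamma>"
proof -
  have "map y [0..<Suc k] = \<tau> # replicate k \<gamma> @ []"
    by (rule map_shape_I) (use assms in auto)
  then show ?thesis unfolding CM_def using assms(3) by auto
qed

lemma CM_mem_kappa:
  assumes "y 0 = \<kappa>" "\<forall>i. 1 \<le> i \<and> i \<le> j \<longrightarrow> y i = \<alpha>" "y (Suc j) = \<kappa>" "y (Suc (Suc j)) = \<gamma>"
  shows "map y [0..<j + 3] \<in> CM \<tau> \<kappa> \<alpha> \<gamma>"
proof -
  have "map y [0..<j + 3] = \<kappa> # replicate j \<alpha> @ [\<kappa>, \<gamma>]"
  proof (rule map_shape_I)
    show "\<forall>i<length [\<kappa>, \<gamma>]. y (Suc j + i) = [\<kappa>, \<gamma>] ! i"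
      using assms(3,4) by (auto simp: less_Suc_eq)
  qed (use assms in auto)
  then show ?thesis unfolding CM_def by auto
qed

lemma CM'_mem_tgg:
  assumes "y 0 = \<tau>" "y 1 = \<gamma>" "y 2 = \<gamma>"
  shows "map y [0..<3] \<in> CM' \<tau> \<kappa> \<alpha> \<gamma>"
proof -
  have "map y [0..<3] = [\<tau>, \<gamma>, \<gamma>]" using assms by (simp add: map_eq_iff less_Suc_eq numeral_eq_Suc)
  then show ?thesis unfolding CM'_def by auto
qed

lemma CM'_mem_kappa:
  assumes "y 0 = \<kappa>" "\<forall>i. 1 \<le> i \<and> i \<le> j \<longrightarrow> y i = \<alpha>" "y (Suc j) = \<kappa>" "y (Suc (Suc j)) = \<gamma>"
  shows "map y [0..<j + 3] \<in> CM' \<tau> \<kappa> \<alpha> \<gamma>"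
proof -
  have "map y [0..<j + 3] = \<kappa> # replicate j \<alpha> @ [\<kappa>, \<gamma>]"
  proof (rule map_shape_I)
    show "\<forall>i<length [\<kappa>, \<gamma>]. y (Suc j + i) = [\<kappa>, \<gamma>] ! i"
      using assms(3,4) by (auto simp: less_Suc_eq)
  qed (use assms in auto)
  then show ?thesis unfolding CM'_def by auto
qed

lemma CM'_mem_kappa2:
  assumes "y 0 = \<kappa>" "\<forall>i. 1 \<le> i \<and> i \<le> j \<longrightarrow> y i = \<alpha>" "y (Suc j) = \<kappa>" "y (Suc (Suc j)) = \<gamma>"
    "y (Suc (Suc (Suc j))) = \<gamma>"
  shows "map y [0..<j + 4] \<in> CM' \<tau> \<kappa> \<alpha> \<gamma>"
proof -
  have "map y [0..<j + 4] = \<kappa> # replicate j \<alpha> @ [\<kappa>, \<gamma>, \<gamma>]"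
  proof (rule map_shape_I)
    show "\<forall>i<length [\<kappa>, \<gamma>, \<gamma>]. y (Suc j + i) = [\<kappa>, \<gamma>, \<gamma>] ! i"
      using assms(3,4,5) by (auto simp: less_Suc_eq)
  qed (use assms in auto)
  then show ?thesis unfolding CM'_def by auto
qed

lemma CM'_prefix:
  assumes "map G [0..<n] \<in> CM' \<tau> \<kappa> \<alpha> \<gamma>"
  shows "(n = 3 \<and> G 0 = \<tau> \<and> G 1 = \<gamma> \<and> G 2 = \<gamma>) \<or>
         (\<exists>j. n = j + 3 \<and> G 0 = \<kappa> \<and> (\<forall>i. 1 \<le> i \<and> i \<le> j \<longrightarrow> G i = \<alpha>) \<and> G (Suc j) = \<kappa> \<and> G (Suc (Suc j)) = \<gamma>) \<or>
         (\<exists>j. n = j + 4 \<and> G 0 = \<kappa> \<and> (\<forall>i. 1 \<le> i \<and> i \<le> j \<longrightarrow> G i = \<alpha>) \<and> G (Suc j) = \<kappa> \<and> G (Suc (Suc j)) = \<gamma>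
              \<and> G (Suc (Suc (Suc j))) = \<gamma>)"
  using assms
proof (cases rule: CM'_cases)
  case 1
  then show ?thesis using map3_D[OF 1] by simp
next
  case (2 j)
  from map_shape_D[OF 2] have "n = j + 4 \<and> G 0 = \<kappa> \<and> (\<forall>i. 1 \<le> i \<and> i \<le> j \<longrightarrow> G i = \<alpha>) \<and> G (Suc j) = \<kappa> \<and> G (Suc (Suc j)) = \<gamma>
              \<and> G (Suc (Suc (Suc j))) = \<gamma>"
    by (auto dest: spec[of _ 0] spec[of _ 1] spec[of _ 2] simp: numeral_eq_Suc)
  then show ?thesis by blast
next
  case (3 j)
  from map_shape_D[OF 3] have "n = j + 3 \<and> G 0 = \<kappa> \<and> (\<forall>i. 1 \<le> i \<and> i \<le> j \<longrightarrow> G i = \<alpha>) \<and> G (Suc j) = \<kappa> \<and> G (Suc (Suc j)) = \<gamma>"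
    by (auto dest: spec[of _ 0] spec[of _ 1] simp: numeral_eq_Suc)
  then show ?thesis by blast
qed

lemma CM_prefix:
  assumes "map G [0..<n] \<in> CM \<tau> \<kappa> \<alpha> \<gamma>"
  shows "(\<exists>k\<ge>2. n = Suc k \<and> G 0 = \<tau> \<and> (\<forall>i. 1 \<le> i \<and> i \<le> k \<longrightarrow> G i = \<gamma>)) \<or>
         (\<exists>j. n = j + 3 \<and> G 0 = \<kappa> \<and> (\<forall>i. 1 \<le> i \<and> i \<le> j \<longrightarrow> G i = \<alpha>) \<and> G (Suc j) = \<kappa> \<and> G (Suc (Suc j)) = \<gamma>)"
  using assms
proof (cases rule: CM_cases)
  case (1 k)
  then have "map G [0..<n] = \<tau> # replicate k \<gamma> @ []" by simp
  from map_shape_D[OF this] show ?thesis using 1 by auto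
next
  case (2 j)
  from map_shape_D[OF 2] have "n = j + 3 \<and> G 0 = \<kappa> \<and> (\<forall>i. 1 \<le> i \<and> i \<le> j \<longrightarrow> G i = \<alpha>) \<and> G (Suc j) = \<kappa> \<and> G (Suc (Suc j)) = \<gamma>"
    by (auto dest: spec[of _ 0] spec[of _ 1] simp: numeral_eq_Suc)
  then show ?thesis by blast
qed

end


context setting begin

lemma mainA:
  assumes y: "y \<in> Om"
  shows "dec_len D2 (Gm D1 f1 y) = length (f1 (map y [0..<dec_len D1 y]))"
proof -
  define L where "L = dec_len D1 y"
  define B where "B = map y [0..<L]"
  define G where "G = Gm D1 f1 y"
  define z where "z = (\<lambda>i. y (L + i))"
  have L0: "0 < L" and BD: "B \<in> D1" and mx: "\<forall>n>L. map y [0..<n] \<notin> D1"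
    using dec_len_good[OF y good1] unfolding L_def B_def by auto
  have lenB: "length B = L" unfolding B_def by simp
  have ne: "\<forall>j. f1 (decomp D1 y j) \<noteq> []" using okf_ne[OF okf1 y] .
  have Glt: "G i = f1 B ! i" if "i < length (f1 B)" for i
    using Gm_lt[OF ne that[unfolded B_def L_def]] unfolding G_def B_def L_def .
  have Gge: "G (length (f1 B) + n) = Gm D1 f1 z n" for n
    using Gm_ge[OF ne, of n] unfolding G_def B_def L_def z_def .
  have zO: "z \<in> Om" unfolding z_def by (rule Omega_shift[OF y])
  have GP: "map G [0..<length (f1 B)] = f1 B"
    by (rule nth_equalityI) (simp_all add: Glt)
  have f1B: "f1 B \<in> D2" by (rule f1_in[OF BD])
  have lf: "0 < length (f1 B)" using good_ne[OF good2 f1B] by simp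
  have notCM: "map y [0..<n] \<notin> CM \<tau> \<kappa> \<alpha> \<gamma>" if "L < n" for n
    using mx that by blast
  have main: "map G [0..<n] \<notin> CM' \<tau> \<kappa> \<alpha> \<gamma>" if nl: "length (f1 B) < n" for n
  proof
    assume mem: "map G [0..<n] \<in> CM' \<tau> \<kappa> \<alpha> \<gamma>"
    note W = CM'_prefix[OF mem]
    from BD show False
    proof (cases rule: D1_cases)
      case (1 k)
      have fB: "f1 B = \<kappa> # replicate (k - 2) \<alpha> @ [\<kappa>, \<gamma>]" using 1 g0_A by simp
      have sG: "length (f1 B) = Suc (k - 2) + 2 \<and> G 0 = \<kappa> \<and> (\<forall>i<2. G (Suc (k - 2) + i) = [\<kappa>, \<gamma>] ! i)"
        using map_shape_D[OF GP[unfolded fB]] fB by simp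
      have G0: "G 0 = \<kappa>" and lfB: "length (f1 B) = k + 1" using sG 1(1) by auto
      have A: "\<forall>i<2. G (Suc (k - 2) + i) = [\<kappa>, \<gamma>] ! i" using sG by blast
      have "G (Suc (k - 2)) = \<kappa>" using A[rule_format, of 0] by simp
      moreover have "Suc (k - 2) = k - 1" using 1(1) by simp
      ultimately have Gk: "G (k - 1) = \<kappa>" by simp
      have "map y [0..<L] = \<tau> # replicate k \<gamma> @ []" using 1 B_def by simp
      from map_shape_D[OF this] have sy: "L = Suc k" "y 0 = \<tau>" "\<forall>i. 1 \<le> i \<and> i \<le> k \<longrightarrow> y i = \<gamma>"
        by auto
      have yk: "y (Suc k) \<noteq> \<gamma>"
      proof
        assume "y (Suc k) = \<gamma>"
        then have "\<forall>i. 1 \<le> i \<and> i \<le> Suc k \<longrightarrow> y i = \<gamma>" using sy(3) by (auto simp: le_Suc_eq)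
        then have "map y [0..<Suc (Suc k)] \<in> CM \<tau> \<kappa> \<alpha> \<gamma>" using CM_mem_tau[of y "Suc k"] sy 1 by simp
        then show False using notCM[of "Suc (Suc k)"] sy by simp
      qed
      show False using W
      proof (elim disjE exE conjE)
        assume "G 0 = \<tau>" then show False using G0 tk by simp
      next
        fix j assume n: "n = j + 3" and a: "\<forall>i. 1 \<le> i \<and> i \<le> j \<longrightarrow> G i = \<alpha>"
        have "1 \<le> k - 1 \<and> k - 1 \<le> j" using n nl lfB 1(1) by arith
        then have "G (k - 1) = \<alpha>" using a by blast
        then show False using Gk ka by simp
      next
        fix j assume n: "n = j + 4" and a: "\<forall>i. 1 \<le> i \<and> i \<le> j \<longrightarrow> G i = \<alpha>"
          and g3: "G (Suc (Suc (Suc j))) = \<gamma>"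
        show False
        proof (cases "k - 1 \<le> j")
          case True
          then have "1 \<le> k - 1 \<and> k - 1 \<le> j" using 1(1) by arith
          then have "G (k - 1) = \<alpha>" using a by blast
          then show False using Gk ka by simp
        next
          case False
          then have "Suc (Suc (Suc j)) = length (f1 B) + 0" using nl n lfB by simp
          then have "Gm D1 f1 z 0 = \<gamma>" using g3 Gge[of 0] by simp
          then have "z 0 = \<gamma>" using Gm_gamma[OF okf1 zO] by blast
          then show False using yk sy(1) unfolding z_def by simp
        qed
      qed
    next
      case (2 k)
      have fB: "f1 B = \<kappa> # replicate (k - 1) \<alpha> @ [\<kappa>, \<gamma>, \<gamma>]" using 2 g0_B by simp
      have sG: "length (f1 B) = Suc (k - 1) + 3 \<and> G 0 = \<kappa> \<and> (\<forall>i<3. G (Suc (k - 1) + i) = [\<kappa>, \<gamma>, \<gamma>] ! i)"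
        using map_shape_D[OF GP[unfolded fB]] fB by simp
      have G0: "G 0 = \<kappa>" and lfB: "length (f1 B) = k + 3" using sG 2(1) by auto
      have A: "\<forall>i<3. G (Suc (k - 1) + i) = [\<kappa>, \<gamma>, \<gamma>] ! i" using sG by blast
      have "G (Suc (k - 1)) = \<kappa>" using A[rule_format, of 0] by simp
      moreover have "Suc (k - 1) = k" using 2(1) by simp
      ultimately have Gk: "G k = \<kappa>" by simp
      show False using W
      proof (elim disjE exE conjE)
        assume "G 0 = \<tau>" then show False using G0 tk by simp
      next
        fix j assume n: "n = j + 3" and a: "\<forall>i. 1 \<le> i \<and> i \<le> j \<longrightarrow> G i = \<alpha>"
        have "1 \<le> k \<and> k \<le> j" using n nl lfB 2(1) by arith
        then have "G k = \<alpha>" using a by blast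
        then show False using Gk ka by simp
      next
        fix j assume n: "n = j + 4" and a: "\<forall>i. 1 \<le> i \<and> i \<le> j \<longrightarrow> G i = \<alpha>"
        have "1 \<le> k \<and> k \<le> j" using n nl lfB 2(1) by arith
        then have "G k = \<alpha>" using a by blast
        then show False using Gk ka by simp
      qed
    next
      case 3
      have fB: "f1 B = [\<tau>, \<gamma>, \<gamma>]" using 3 g0_C by simp
      have G0: "G 0 = \<tau>" using Glt[of 0] fB by simp
      have lfB: "length (f1 B) = 3" using fB by simp
      show False using W
      proof (elim disjE exE conjE)
        assume "n = 3" then show False using nl lfB by simp
      next
        assume "G 0 = \<kappa>" then show False using G0 tk by simp
      next
        assume "G 0 = \<kappa>" then show False using G0 tk by simp
      qed
    next
      case (4 c)
      have L1: "L = 1" using 4 lenB by simp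
      have c: "c = y 0" using 4 B_def L1 by simp
      have fB: "f1 B = [c]" using 4 g0_D by simp
      have G0: "G 0 = y 0" using Glt[of 0] fB c by simp
      have GS: "G (Suc i) = Gm D1 f1 z i" for i using Gge[of i] fB by simp
      have zz: "z i = y (Suc i)" for i unfolding z_def L1 by simp
      show False using W
      proof (elim disjE exE conjE)
        assume "G 0 = \<tau>" "G 1 = \<gamma>" "G 2 = \<gamma>"
        then have "y 0 = \<tau>" "Gm D1 f1 z 0 = \<gamma>" "Gm D1 f1 z 1 = \<gamma>"
          using G0 GS[of 0] GS[of 1] by (simp_all add: numeral_eq_Suc)
        then have "y 0 = \<tau>" "y 1 = \<gamma>" "y 2 = \<gamma>"
          using Gm_gg[OF okf1 zO] zz[of 0] zz[of 1] by (simp_all add: numeral_eq_Suc)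
        then have "map y [0..<3] \<in> CM \<tau> \<kappa> \<alpha> \<gamma>" using CM_mem_tau[of y 2]
          by (auto simp: numeral_eq_Suc le_Suc_eq)
        then show False using notCM[of 3] L1 by simp
      next
        fix j assume "G 0 = \<kappa>" and a: "\<forall>i. 1 \<le> i \<and> i \<le> j \<longrightarrow> G i = \<alpha>"
          and b: "G (Suc j) = \<kappa>" and d: "G (Suc (Suc j)) = \<gamma>"
        have r: "(\<forall>i<j. z i = \<alpha>) \<and> z j = \<kappa> \<and> z (Suc j) = \<gamma>"
        proof (rule Gm_run[OF okf1, rule_format, OF zO])
          have "\<forall>i<j. Gm D1 f1 z i = \<alpha>"
          proof (intro allI impI)
            fix i assume "i < j"
            then have "G (Suc i) = \<alpha>" using a by simp
            then show "Gm D1 f1 z i = \<alpha>" using GS[of i] by simp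
          qed
          moreover have "Gm D1 f1 z j = \<kappa>" using GS[of j] b by simp
          moreover have "Gm D1 f1 z (Suc j) = \<gamma>" using GS[of "Suc j"] d by simp
          ultimately show "(\<forall>i<j. Gm D1 f1 z i = \<alpha>) \<and> Gm D1 f1 z j = \<kappa> \<and> Gm D1 f1 z (Suc j) = \<gamma>"
            by blast
        qed
        have "map y [0..<j + 3] \<in> CM \<tau> \<kappa> \<alpha> \<gamma>"
        proof (rule CM_mem_kappa)
          show "y 0 = \<kappa>" using \<open>G 0 = \<kappa>\<close> G0 by simp
          show "\<forall>i. 1 \<le> i \<and> i \<le> j \<longrightarrow> y i = \<alpha>"
          proof (intro allI impI)
            fix i assume "1 \<le> i \<and> i \<le> j"
            then show "y i = \<alpha>" using r zz[of "i - 1"] by (cases i) auto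
          qed
          show "y (Suc j) = \<kappa>" using r zz[of j] by simp
          show "y (Suc (Suc j)) = \<gamma>" using r zz[of "Suc j"] by simp
        qed
        then show False using notCM[of "j + 3"] L1 by simp
      next
        fix j assume "G 0 = \<kappa>" and a: "\<forall>i. 1 \<le> i \<and> i \<le> j \<longrightarrow> G i = \<alpha>"
          and b: "G (Suc j) = \<kappa>" and d: "G (Suc (Suc j)) = \<gamma>"
        have r: "(\<forall>i<j. z i = \<alpha>) \<and> z j = \<kappa> \<and> z (Suc j) = \<gamma>"
        proof (rule Gm_run[OF okf1, rule_format, OF zO])
          have "\<forall>i<j. Gm D1 f1 z i = \<alpha>"
          proof (intro allI impI)
            fix i assume "i < j"
            then have "G (Suc i) = \<alpha>" using a by simp
            then show "Gm D1 f1 z i = \<alpha>" using GS[of i] by simp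
          qed
          moreover have "Gm D1 f1 z j = \<kappa>" using GS[of j] b by simp
          moreover have "Gm D1 f1 z (Suc j) = \<gamma>" using GS[of "Suc j"] d by simp
          ultimately show "(\<forall>i<j. Gm D1 f1 z i = \<alpha>) \<and> Gm D1 f1 z j = \<kappa> \<and> Gm D1 f1 z (Suc j) = \<gamma>"
            by blast
        qed
        have "map y [0..<j + 3] \<in> CM \<tau> \<kappa> \<alpha> \<gamma>"
        proof (rule CM_mem_kappa)
          show "y 0 = \<kappa>" using \<open>G 0 = \<kappa>\<close> G0 by simp
          show "\<forall>i. 1 \<le> i \<and> i \<le> j \<longrightarrow> y i = \<alpha>"
          proof (intro allI impI)
            fix i assume "1 \<le> i \<and> i \<le> j"
            then show "y i = \<alpha>" using r zz[of "i - 1"] by (cases i) auto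
          qed
          show "y (Suc j) = \<kappa>" using r zz[of j] by simp
          show "y (Suc (Suc j)) = \<gamma>" using r zz[of "Suc j"] by simp
        qed
        then show False using notCM[of "j + 3"] L1 by simp
      qed
    qed
  qed
  have "dec_len D2 G = length (f1 B)"
  proof (rule dec_len_eq)
    show "map G [0..<length (f1 B)] \<in> D2" using GP f1B by simp
    show "\<forall>n>length (f1 B). map G [0..<n] \<notin> D2"
    proof (intro allI impI)
      fix n assume nl: "length (f1 B) < n"
      have "map G [0..<n] \<notin> letters N" using len_letters nl lf by fastforce
      then show "map G [0..<n] \<notin> D2" using main[OF nl] by blast
    qed
  qed (rule lf)
  then show ?thesis unfolding G_def B_def L_def .
qed


lemma mainB:
  assumes y: "y \<in> Om"
  shows "dec_len D1 (Gm D2 f2 y) = length (f2 (map y [0..<dec_len D2 y]))"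
proof -
  define L where "L = dec_len D2 y"
  define B where "B = map y [0..<L]"
  define G where "G = Gm D2 f2 y"
  define z where "z = (\<lambda>i. y (L + i))"
  have L0: "0 < L" and BD: "B \<in> D2" and mx: "\<forall>n>L. map y [0..<n] \<notin> D2"
    using dec_len_good[OF y good2] unfolding L_def B_def by auto
  have lenB: "length B = L" unfolding B_def by simp
  have ne: "\<forall>j. f2 (decomp D2 y j) \<noteq> []" using okf_ne[OF okf2 y] .
  have Glt: "G i = f2 B ! i" if "i < length (f2 B)" for i
    using Gm_lt[OF ne that[unfolded B_def L_def]] unfolding G_def B_def L_def .
  have Gge: "G (length (f2 B) + n) = Gm D2 f2 z n" for n
    using Gm_ge[OF ne, of n] unfolding G_def B_def L_def z_def .
  have zO: "z \<in> Om" unfolding z_def by (rule Omega_shift[OF y])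
  have GP: "map G [0..<length (f2 B)] = f2 B"
    by (rule nth_equalityI) (simp_all add: Glt)
  have f2B: "f2 B \<in> D1" by (rule f2_in[OF BD])
  have lf: "0 < length (f2 B)" using good_ne[OF good1 f2B] by simp
  have notCM: "map y [0..<n] \<notin> CM' \<tau> \<kappa> \<alpha> \<gamma>" if "L < n" for n
    using mx that by blast
  have main: "map G [0..<n] \<notin> CM \<tau> \<kappa> \<alpha> \<gamma>" if nl: "length (f2 B) < n" for n
  proof
    assume mem: "map G [0..<n] \<in> CM \<tau> \<kappa> \<alpha> \<gamma>"
    note W = CM_prefix[OF mem]
    from BD show False
    proof (cases rule: D2_cases)
      case 1
      have fB: "f2 B = [\<kappa>, \<kappa>, \<gamma>]" using 1 g0'_A by simp
      have G0: "G 0 = \<kappa>" using Glt[of 0] fB by simp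
      have G1: "G 1 = \<kappa>" using Glt[of 1] fB by simp
      have lfB: "length (f2 B) = 3" using fB by simp
      show False using W
      proof (elim disjE exE conjE)
        fix k assume "G 0 = \<tau>" then show False using G0 tk by simp
      next
        fix j assume n: "n = j + 3" and a: "\<forall>i. 1 \<le> i \<and> i \<le> j \<longrightarrow> G i = \<alpha>"
        have "1 \<le> (1::nat) \<and> 1 \<le> j" using n nl lfB by arith
        then have "G 1 = \<alpha>" using a by blast
        then show False using G1 ka by simp
      qed
    next
      case (2 k)
      have fB: "f2 B = \<kappa> # replicate (Suc k) \<alpha> @ [\<kappa>, \<gamma>]" using 2 g0'_B by simp
      have sG: "length (f2 B) = Suc (Suc k) + 2 \<and> G 0 = \<kappa> \<and> (\<forall>i<2. G (Suc (Suc k) + i) = [\<kappa>, \<gamma>] ! i)"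
        using map_shape_D[OF GP[unfolded fB]] fB by simp
      have G0: "G 0 = \<kappa>" and lfB: "length (f2 B) = k + 4" using sG by auto
      have A: "\<forall>i<2. G (Suc (Suc k) + i) = [\<kappa>, \<gamma>] ! i" using sG by blast
      have Gk: "G (Suc (Suc k)) = \<kappa>" using A[rule_format, of 0] by simp
      show False using W
      proof (elim disjE exE conjE)
        fix k' assume "G 0 = \<tau>" then show False using G0 tk by simp
      next
        fix j assume n: "n = j + 3" and a: "\<forall>i. 1 \<le> i \<and> i \<le> j \<longrightarrow> G i = \<alpha>"
        have "1 \<le> Suc (Suc k) \<and> Suc (Suc k) \<le> j" using n nl lfB by arith
        then have "G (Suc (Suc k)) = \<alpha>" using a by blast
        then show False using Gk ka by simp
      qed
    next
      case (3 k)
      have fB: "f2 B = \<tau> # replicate (k + 2) \<gamma>" using 3 g0'_C by simp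
      have G0: "G 0 = \<tau>" using Glt[of 0] fB by simp
      have lfB: "length (f2 B) = k + 3" using fB by simp
      from map_shape_D[OF 3[unfolded B_def]] have sy: "L = Suc k + 2" "y 0 = \<kappa>"
        "\<forall>i. 1 \<le> i \<and> i \<le> k \<longrightarrow> y i = \<alpha>" "\<forall>i<2. y (Suc k + i) = [\<kappa>, \<gamma>] ! i"
        by auto
      have y1: "y (Suc k) = \<kappa>" using sy(4)[rule_format, of 0] by simp
      have y2: "y (Suc (Suc k)) = \<gamma>" using sy(4)[rule_format, of 1] by simp
      have yk: "y (Suc (Suc (Suc k))) \<noteq> \<gamma>"
      proof
        assume "y (Suc (Suc (Suc k))) = \<gamma>"
        then have "map y [0..<k + 4] \<in> CM' \<tau> \<kappa> \<alpha> \<gamma>"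
          using CM'_mem_kappa2[of y k] sy y1 y2 by simp
        then show False using notCM[of "k + 4"] sy(1) by simp
      qed
      show False using W
      proof (elim disjE exE conjE)
        fix k' assume k': "2 \<le> k'" "n = Suc k'" and a: "\<forall>i. 1 \<le> i \<and> i \<le> k' \<longrightarrow> G i = \<gamma>"
        have "1 \<le> k + 3 \<and> k + 3 \<le> k'" using k' nl lfB by arith
        then have "G (k + 3) = \<gamma>" using a by blast
        then have "Gm D2 f2 z 0 = \<gamma>" using Gge[of 0] lfB by simp
        then have "z 0 = \<gamma>" using Gm_gamma[OF okf2 zO] by blast
        then show False using yk sy(1) unfolding z_def by simp
      next
        fix j assume "G 0 = \<kappa>" then show False using G0 tk by simp
      qed
    next
      case (4 c)
      have L1: "L = 1" using 4 lenB by simp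
      have c: "c = y 0" using 4 B_def L1 by simp
      have fB: "f2 B = [c]" using 4 g0'_D by simp
      have G0: "G 0 = y 0" using Glt[of 0] fB c by simp
      have GS: "G (Suc i) = Gm D2 f2 z i" for i using Gge[of i] fB by simp
      have zz: "z i = y (Suc i)" for i unfolding z_def L1 by simp
      show False using W
      proof (elim disjE exE conjE)
        fix k assume k: "2 \<le> k" "G 0 = \<tau>" and a: "\<forall>i. 1 \<le> i \<and> i \<le> k \<longrightarrow> G i = \<gamma>"
        have "G 1 = \<gamma>" "G 2 = \<gamma>" using a k by auto
        then have "y 0 = \<tau>" "Gm D2 f2 z 0 = \<gamma>" "Gm D2 f2 z 1 = \<gamma>"
          using k G0 GS[of 0] GS[of 1] by (simp_all add: numeral_eq_Suc)
        then have "y 0 = \<tau>" "y 1 = \<gamma>" "y 2 = \<gamma>"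
          using Gm_gg[OF okf2 zO] zz[of 0] zz[of 1] by (simp_all add: numeral_eq_Suc)
        then have "map y [0..<3] \<in> CM' \<tau> \<kappa> \<alpha> \<gamma>" by (rule CM'_mem_tgg)
        then show False using notCM[of 3] L1 by simp
      next
        fix j assume "G 0 = \<kappa>" and a: "\<forall>i. 1 \<le> i \<and> i \<le> j \<longrightarrow> G i = \<alpha>"
          and b: "G (Suc j) = \<kappa>" and d: "G (Suc (Suc j)) = \<gamma>"
        have r: "(\<forall>i<j. z i = \<alpha>) \<and> z j = \<kappa> \<and> z (Suc j) = \<gamma>"
        proof (rule Gm_run[OF okf2, rule_format, OF zO])
          have "\<forall>i<j. Gm D2 f2 z i = \<alpha>"
          proof (intro allI impI)
            fix i assume "i < j"
            then have "G (Suc i) = \<alpha>" using a by simp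
            then show "Gm D2 f2 z i = \<alpha>" using GS[of i] by simp
          qed
          moreover have "Gm D2 f2 z j = \<kappa>" using GS[of j] b by simp
          moreover have "Gm D2 f2 z (Suc j) = \<gamma>" using GS[of "Suc j"] d by simp
          ultimately show "(\<forall>i<j. Gm D2 f2 z i = \<alpha>) \<and> Gm D2 f2 z j = \<kappa> \<and> Gm D2 f2 z (Suc j) = \<gamma>"
            by blast
        qed
        have "map y [0..<j + 3] \<in> CM' \<tau> \<kappa> \<alpha> \<gamma>"
        proof (rule CM'_mem_kappa)
          show "y 0 = \<kappa>" using \<open>G 0 = \<kappa>\<close> G0 by simp
          show "\<forall>i. 1 \<le> i \<and> i \<le> j \<longrightarrow> y i = \<alpha>"
          proof (intro allI impI)
            fix i assume "1 \<le> i \<and> i \<le> j"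
            then show "y i = \<alpha>" using r zz[of "i - 1"] by (cases i) auto
          qed
          show "y (Suc j) = \<kappa>" using r zz[of j] by simp
          show "y (Suc (Suc j)) = \<gamma>" using r zz[of "Suc j"] by simp
        qed
        then show False using notCM[of "j + 3"] L1 by simp
      qed
    qed
  qed
  have "dec_len D1 G = length (f2 B)"
  proof (rule dec_len_eq)
    show "map G [0..<length (f2 B)] \<in> D1" using GP f2B by simp
    show "\<forall>n>length (f2 B). map G [0..<n] \<notin> D1"
    proof (intro allI impI)
      fix n assume nl: "length (f2 B) < n"
      have "map G [0..<n] \<notin> letters N" using len_letters nl lf by fastforce
      then show "map G [0..<n] \<notin> D1" using main[OF nl] by blast
    qed
  qed (rule lf)
  then show ?thesis unfolding G_def B_def L_def .
qed

end


context setting begin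

lemma f1_alph: "set w \<subseteq> Alph N \<Longrightarrow> set (f1 w) \<subseteq> Alph N"
  unfolding g0_def using tA kA aA gA by auto

lemma f2_alph: "set w \<subseteq> Alph N \<Longrightarrow> set (f2 w) \<subseteq> Alph N"
  unfolding g0'_def using tA kA aA gA by auto

lemma f1_ne: "\<forall>w\<in>D1. f1 w \<noteq> []" using okf1 unfolding okf_def by blast
lemma f2_ne: "\<forall>w\<in>D2. f2 w \<noteq> []" using okf2 unfolding okf_def by blast

lemma part1: "x \<in> Om \<Longrightarrow> decomp D2 (Gm D1 f1 x) j = f1 (decomp D1 x j)"
  using decomp_Gm[OF good1 good2 f1_ne, of j] mainA by blast

lemma part2: "u \<in> Om \<Longrightarrow> decomp D1 (Gm D2 f2 u) j = f2 (decomp D2 u j)"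
  using decomp_Gm[OF good2 good1 f2_ne, of j] mainB by blast

lemma gm_eq: "gmap N \<tau> \<kappa> \<alpha> \<gamma> = Gm D1 f1"
  by (rule ext) (simp add: gmap_def Gm_def)

lemma hm_eq: "u \<in> Om \<Longrightarrow> hmap N \<tau> \<kappa> \<alpha> \<gamma> u = Gm D2 f2 u"
  unfolding hmap_def Gm_def using g0_inv_eq decomp_good[OF _ good2] by presburger

lemma G1_Om: "x \<in> Om \<Longrightarrow> Gm D1 f1 x \<in> Om"
  by (rule Gm_Omega[OF _ good1]) (use f1_ne f1_alph g0_D in auto)

lemma G2_Om: "x \<in> Om \<Longrightarrow> Gm D2 f2 x \<in> Om"
  by (rule Gm_Omega[OF _ good2]) (use f2_ne f2_alph g0'_D in auto)

lemma result:
  "(\<forall>x \<in> Om. decomp D2 (gmap N \<tau> \<kappa> \<alpha> \<gamma> x) = (\<lambda>j. f1 (decomp D1 x j))) \<and>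
   (\<forall>u \<in> Om. decomp D1 (hmap N \<tau> \<kappa> \<alpha> \<gamma> u) = (\<lambda>j. g0_inv N \<tau> \<kappa> \<alpha> \<gamma> (decomp D2 u j))) \<and>
   bij_betw (gmap N \<tau> \<kappa> \<alpha> \<gamma>) Om Om"
proof (intro conjI ballI)
  fix x assume x: "x \<in> Om"
  show "decomp D2 (gmap N \<tau> \<kappa> \<alpha> \<gamma> x) = (\<lambda>j. f1 (decomp D1 x j))"
    unfolding gm_eq using part1[OF x] by (intro ext) simp
next
  fix u assume u: "u \<in> Om"
  show "decomp D1 (hmap N \<tau> \<kappa> \<alpha> \<gamma> u) = (\<lambda>j. g0_inv N \<tau> \<kappa> \<alpha> \<gamma> (decomp D2 u j))"
    unfolding hm_eq[OF u]
  proof (rule ext)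
    fix j
    show "decomp D1 (Gm D2 f2 u) j = g0_inv N \<tau> \<kappa> \<alpha> \<gamma> (decomp D2 u j)"
      using part2[OF u] g0_inv_eq[OF decomp_good[OF u good2]] by simp
  qed
next
  show "bij_betw (gmap N \<tau> \<kappa> \<alpha> \<gamma>) Om Om"
    unfolding bij_betw_def gm_eq
  proof
    show "inj_on (Gm D1 f1) Om"
    proof (rule inj_onI)
      fix x1 x2 assume x1: "x1 \<in> Om" and x2: "x2 \<in> Om" and e: "Gm D1 f1 x1 = Gm D1 f1 x2"
      have "decomp D1 x1 j = decomp D1 x2 j" for j
      proof -
        have "f1 (decomp D1 x1 j) = f1 (decomp D1 x2 j)"
          using part1[OF x1, of j] part1[OF x2, of j] e by simp
        then have "f2 (f1 (decomp D1 x1 j)) = f2 (f1 (decomp D1 x2 j))" by simp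
        then show ?thesis using f21[OF decomp_good[OF x1 good1]] f21[OF decomp_good[OF x2 good1]] by simp
      qed
      then have "decomp D1 x1 = decomp D1 x2" by (rule ext)
      then show "x1 = x2"
        using inf_concat_decomp[OF good1] x1 x2 by (metis ext)
    qed
  next
    show "Gm D1 f1 ` Om = Om"
    proof
      show "Gm D1 f1 ` Om \<subseteq> Om" using G1_Om by blast
      show "Om \<subseteq> Gm D1 f1 ` Om"
      proof
        fix u assume u: "u \<in> Om"
        define x where "x = Gm D2 f2 u"
        have x: "x \<in> Om" unfolding x_def by (rule G2_Om[OF u])
        have "(\<lambda>j. f1 (decomp D1 x j)) = decomp D2 u"
        proof (rule ext)
          fix j
          show "f1 (decomp D1 x j) = decomp D2 u j"
            unfolding x_def part2[OF u] by (rule f12[OF decomp_good[OF u good2]])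
        qed
        then have "Gm D1 f1 x = inf_concat (decomp D2 u)" unfolding Gm_def by simp
        also have "\<dots> = u" using inf_concat_decomp[OF good2] u by (metis ext)
        finally show "u \<in> Gm D1 f1 ` Om" using x by (metis image_eqI)
      qed
    qed
  qed
qed

end

theorem proposition7p1:
  fixes N \<tau> \<kappa> \<alpha> \<gamma> :: nat
  assumes "N \<ge> 4"
    and "\<tau> \<in> Alph N" "\<kappa> \<in> Alph N" "\<alpha> \<in> Alph N" "\<gamma> \<in> Alph N"
    and "\<tau> \<noteq> \<kappa>" "\<tau> \<noteq> \<gamma>" "\<kappa> \<noteq> \<alpha>" "\<kappa> \<noteq> \<gamma>" "\<alpha> \<noteq> \<gamma>"
  shows "(\<forall>x \<in> Omega N \<kappa>.
           decomp (CM' \<tau> \<kappa> \<alpha> \<gamma> \<union> letters N) (gmap N \<tau> \<kappa> \<alpha> \<gamma> x)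
             = (\<lambda>j. g0 \<tau> \<kappa> \<alpha> \<gamma> (decomp (CM \<tau> \<kappa> \<alpha> \<gamma> \<union> letters N) x j))) \<and>
         (\<forall>u \<in> Omega N \<kappa>.
           decomp (CM \<tau> \<kappa> \<alpha> \<gamma> \<union> letters N) (hmap N \<tau> \<kappa> \<alpha> \<gamma> u)
             = (\<lambda>j. g0_inv N \<tau> \<kappa> \<alpha> \<gamma> (decomp (CM' \<tau> \<kappa> \<alpha> \<gamma> \<union> letters N) u j))) \<and>
         bij_betw (gmap N \<tau> \<kappa> \<alpha> \<gamma>) (Omega N \<kappa>) (Omega N \<kappa>)"
proof -
  interpret S: setting N \<tau> \<kappa> \<alpha> \<gamma>
    by unfold_locales (use assms in auto)
  show ?thesis by (rule S.result)
qed


end
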